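(* Suppose $X$ is a Suslin line. Then $\pi Nt(X)\geq\omega_1$.
   Context: A Suslin line is a linearly ordered set with the order topology that has the countable chain condition (every family of pairwise disjoint nonempty open sets is countable) but is not separable. Families of open sets are ordered by inclusion; a family is $\kappa^{\mathrm{op}}$-like if no member is contained in $\kappa$-many members. $\pi Nt(X)$ is the least $\kappa\geq\omega$ such that $X$ has a $\kappa^{\mathrm{op}}$-like $\pi$-base. *)

theory Defs
  imports "HOL-Analysis.Analysis"
begin

text \<open>A linearly ordered set with the order topology is modelled by a type of class
  linorder_topology (the topology is the order topology).\<close>

definition ccc_space :: "'a::topological_space itself \<Rightarrow> bool" where
  "ccc_space _ \<longleftrightarrow>
     (\<forall>F::'a set set. (\<forall>U\<in>F. open U \<and> U \<noteq> {}) \<and> pairwise disjnt F \<longrightarrow> countable F)"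

definition separable_space :: "'a::topological_space itself \<Rightarrow> bool" where
  "separable_space _ \<longleftrightarrow> (\<exists>D::'a set. countable D \<and> closure D = UNIV)"

definition suslin_line :: "'a::linorder_topology itself \<Rightarrow> bool" where
  "suslin_line T \<longleftrightarrow> ccc_space T \<and> \<not> separable_space T"

definition pi_base :: "'a::topological_space set set \<Rightarrow> bool" where
  "pi_base B \<longleftrightarrow> (\<forall>U\<in>B. open U \<and> U \<noteq> {}) \<and>
     (\<forall>W. open W \<and> W \<noteq> {} \<longrightarrow> (\<exists>U\<in>B. U \<subseteq> W))"

definition op_like :: "'k rel \<Rightarrow> 'a set set \<Rightarrow> bool" where
  "op_like \<kappa> B \<longleftrightarrow> (\<forall>U\<in>B. \<not> ((\<kappa>, card_of {V\<in>B. U \<subseteq> V}) \<in> ordLeq))"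

end

theory Submission
  imports Defs
begin

definition cvx :: "'a::linorder set \<Rightarrow> bool" where
  "cvx S \<longleftrightarrow> (\<forall>x\<in>S. \<forall>z\<in>S. \<forall>y. x \<le> y \<and> y \<le> z \<longrightarrow> y \<in> S)"

lemma cvx_nbhd_gen:
  fixes U :: "'a::linorder set"
  assumes "generate_topology (range (\<lambda>a. {..< a}) \<union> range (\<lambda>a. {a <..})) U"
  shows "\<forall>x\<in>U. \<exists>C. generate_topology (range (\<lambda>a. {..< a}) \<union> range (\<lambda>a. {a <..})) C \<and> cvx C \<and> x \<in> C \<and> C \<subseteq> U"
  using assms
proof induct
  case UNIV
  then show ?case by (auto simp: cvx_def intro!: exI[of _ UNIV] generate_topology.UNIV)
next
  case (Int a b)
  show ?case
  proof
    fix x assume "x \<in> a \<inter> b"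
    then obtain C1 C2 where "generate_topology (range (\<lambda>a. {..< a}) \<union> range (\<lambda>a. {a <..})) C1" "cvx C1" "x \<in> C1" "C1 \<subseteq> a"
      "generate_topology (range (\<lambda>a. {..< a}) \<union> range (\<lambda>a. {a <..})) C2" "cvx C2" "x \<in> C2" "C2 \<subseteq> b"
      using Int by blast
    then show "\<exists>C. generate_topology (range (\<lambda>a. {..< a}) \<union> range (\<lambda>a. {a <..})) C \<and> cvx C \<and> x \<in> C \<and> C \<subseteq> a \<inter> b"
    proof (intro exI[of _ "C1 \<inter> C2"] conjI)
      show "generate_topology (range (\<lambda>a. {..< a}) \<union> range (\<lambda>a. {a <..})) (C1 \<inter> C2)"
        by (rule generate_topology.Int) fact+
      show "cvx (C1 \<inter> C2)" using \<open>cvx C1\<close> \<open>cvx C2\<close> unfolding cvx_def by blast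
    qed (use \<open>x \<in> C1\<close> \<open>x \<in> C2\<close> \<open>C1 \<subseteq> a\<close> \<open>C2 \<subseteq> b\<close> in auto)
  qed
next
  case (UN K)
  show ?case
  proof
    fix x assume "x \<in> \<Union>K"
    then obtain k where k: "k \<in> K" "x \<in> k" by blast
    then obtain C where "generate_topology (range (\<lambda>a. {..< a}) \<union> range (\<lambda>a. {a <..})) C" "cvx C" "x \<in> C" "C \<subseteq> k"
      using UN.hyps(2)[OF k(1)] by blast
    then show "\<exists>C. generate_topology (range (\<lambda>a. {..< a}) \<union> range (\<lambda>a. {a <..})) C \<and> cvx C \<and> x \<in> C \<and> C \<subseteq> \<Union>K"
      using k by blast
  qed
next
  case (Basis s)
  have g: "generate_topology (range (\<lambda>a. {..< a}) \<union> range (\<lambda>a. {a <..})) s"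
    using Basis by (rule generate_topology.Basis)
  have "cvx s" using Basis unfolding cvx_def
    by (auto dest: le_less_trans less_le_trans)
  then show ?case using g by blast
qed

lemma cvx_nbhd:
  fixes U :: "'a::linorder_topology set"
  assumes "open U" "x \<in> U"
  shows "\<exists>C. open C \<and> cvx C \<and> x \<in> C \<and> C \<subseteq> U"
  using cvx_nbhd_gen[of U] assms unfolding open_generated_order by blast

definition disjf :: "('a set \<times> 'b) set \<Rightarrow> bool" where
  "disjf F \<longleftrightarrow> (\<forall>p\<in>F. \<forall>q\<in>F. p \<noteq> q \<longrightarrow> fst p \<inter> fst q = {})"

lemma maxdisj_ex: "\<exists>F. F \<subseteq> K \<and> disjf F \<and> (\<forall>G. F \<subseteq> G \<and> G \<subseteq> K \<and> disjf G \<longrightarrow> G = F)"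
proof -
  have "\<forall>C\<in>chains {F. F \<subseteq> K \<and> disjf F}. \<Union>C \<in> {F. F \<subseteq> K \<and> disjf F}"
  proof
    fix C assume C: "C \<in> chains {F. F \<subseteq> K \<and> disjf F}"
    have "disjf (\<Union>C)"
      unfolding disjf_def
    proof (intro ballI impI)
      fix p q assume "p \<in> \<Union>C" "q \<in> \<Union>C" "p \<noteq> q"
      then obtain F1 F2 where "F1 \<in> C" "F2 \<in> C" "p \<in> F1" "q \<in> F2" by blast
      moreover have "F1 \<subseteq> F2 \<or> F2 \<subseteq> F1" using C \<open>F1 \<in> C\<close> \<open>F2 \<in> C\<close>
        unfolding chains_def chain_subset_def by blast
      moreover have "disjf F1" "disjf F2" using C \<open>F1 \<in> C\<close> \<open>F2 \<in> C\<close> unfolding chains_def by auto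
      ultimately show "fst p \<inter> fst q = {}" using \<open>p \<noteq> q\<close> unfolding disjf_def by blast
    qed
    moreover have "\<Union>C \<subseteq> K" using C unfolding chains_def by blast
    ultimately show "\<Union>C \<in> {F. F \<subseteq> K \<and> disjf F}" by blast
  qed
  from Zorn_Lemma[OF this] obtain M where M: "M \<in> {F. F \<subseteq> K \<and> disjf F}"
    "\<forall>X\<in>{F. F \<subseteq> K \<and> disjf F}. M \<subseteq> X \<longrightarrow> X = M" by (rule bexE)
  have "M \<subseteq> K" "disjf M" using M(1) by simp_all
  moreover have "\<forall>G. M \<subseteq> G \<and> G \<subseteq> K \<and> disjf G \<longrightarrow> G = M"
  proof (intro allI impI)
    fix G assume "M \<subseteq> G \<and> G \<subseteq> K \<and> disjf G"
    then show "G = M" using M(2) by simp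
  qed
  ultimately show ?thesis by (intro exI[of _ M]) simp
qed

definition maxdisj :: "('a set \<times> 'b) set \<Rightarrow> ('a set \<times> 'b) set" where
  "maxdisj K = (SOME F. F \<subseteq> K \<and> disjf F \<and> (\<forall>G. F \<subseteq> G \<and> G \<subseteq> K \<and> disjf G \<longrightarrow> G = F))"

lemma maxdisj: "maxdisj K \<subseteq> K" "disjf (maxdisj K)"
  "p \<in> K \<Longrightarrow> (\<And>q. q \<in> maxdisj K \<Longrightarrow> q \<noteq> p \<Longrightarrow> fst p \<inter> fst q = {}) \<Longrightarrow> p \<in> maxdisj K"
proof -
  let ?F = "maxdisj K"
  have h: "?F \<subseteq> K \<and> disjf ?F \<and> (\<forall>G. ?F \<subseteq> G \<and> G \<subseteq> K \<and> disjf G \<longrightarrow> G = ?F)"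
    unfolding maxdisj_def using someI_ex[OF maxdisj_ex] .
  then show "?F \<subseteq> K" "disjf ?F" by auto
  assume p: "p \<in> K" and d: "(\<And>q. q \<in> ?F \<Longrightarrow> q \<noteq> p \<Longrightarrow> fst p \<inter> fst q = {})"
  have "disjf (insert p ?F)" using h d unfolding disjf_def by (metis inf_commute insert_iff)
  then have "insert p ?F = ?F" using h p by blast
  then show "p \<in> ?F" by blast
qed


definition cand :: "'a::linorder_topology set set \<Rightarrow> ('a set \<Rightarrow> bool) \<Rightarrow> ('a set \<times> 'a set) set" where
  "cand B R = {(C,U). U \<in> B \<and> C \<subseteq> U \<and> open C \<and> C \<noteq> {} \<and> cvx C \<and> R U}"

primrec lev :: "'a::linorder_topology set set \<Rightarrow> nat \<Rightarrow> ('a set \<times> 'a set) set" where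
  "lev B 0 = maxdisj (cand B (\<lambda>_. True))"
| "lev B (Suc n) = maxdisj (cand B (\<lambda>U'. \<exists>p\<in>lev B n. U' \<subset> fst p))"

lemma lev_cand: "p \<in> lev B n \<Longrightarrow> snd p \<in> B \<and> fst p \<subseteq> snd p \<and> open (fst p) \<and> fst p \<noteq> {} \<and> cvx (fst p)"
  by (cases n) (use maxdisj(1) in \<open>fastforce simp: cand_def\<close>)+

lemma lev_disj: "disjf (lev B n)"
  by (cases n) (auto intro: maxdisj(2))

lemma lev_parent: "p \<in> lev B (Suc n) \<Longrightarrow> \<exists>q\<in>lev B n. snd p \<subset> fst q"
  using maxdisj(1) by (fastforce simp: cand_def)

lemma lev_eq: "p \<in> lev B n \<Longrightarrow> q \<in> lev B n \<Longrightarrow> x \<in> fst p \<Longrightarrow> x \<in> fst q \<Longrightarrow> p = q"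
  using lev_disj[of B n] unfolding disjf_def by blast

lemma open_minus_pt:
  fixes S :: "'a::t1_space set"
  shows "open S \<Longrightarrow> open (S - {y})"
  by (simp add: open_Diff)

lemma lev_dense:
  fixes B :: "'a::linorder_topology set set"
  assumes pb: "pi_base B"
  shows "open O' \<Longrightarrow> O' \<noteq> {} \<Longrightarrow> (\<forall>x\<in>O'. \<not> open {x}) \<Longrightarrow> \<exists>p\<in>lev B n. fst p \<inter> O' \<noteq> {}"
proof (induction n arbitrary: O')
  case 0
  obtain U where U: "U \<in> B" "U \<subseteq> O'" using pb 0 unfolding pi_base_def by blast
  then obtain x where "x \<in> U" using pb unfolding pi_base_def by blast
  then obtain C where C: "open C" "cvx C" "x \<in> C" "C \<subseteq> U" using cvx_nbhd[of U x] pb U unfolding pi_base_def by blast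
  have pc: "(C,U) \<in> cand B (\<lambda>_. True)" using C U unfolding cand_def by auto
  show ?case
  proof (cases "\<exists>q\<in>lev B 0. q \<noteq> (C,U) \<and> fst (C,U) \<inter> fst q \<noteq> {}")
    case True
    then show ?thesis using C U by auto
  next
    case False
    have "(C,U) \<in> maxdisj (cand B (\<lambda>_. True))"
    proof (rule maxdisj(3)[OF pc])
      fix q assume "q \<in> maxdisj (cand B (\<lambda>_. True))" "q \<noteq> (C,U)"
      then show "fst (C,U) \<inter> fst q = {}" using False by auto
    qed
    then have "(C,U) \<in> lev B 0" by simp
    moreover have "fst (C,U) \<inter> O' \<noteq> {}" using C U  by auto
    ultimately show ?thesis by blast
  qed
next
  case (Suc n)
  then obtain q where q: "q \<in> lev B n" "fst q \<inter> O' \<noteq> {}" by blast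
  let ?S = "fst q \<inter> O'"
  have So: "open ?S" using lev_cand[OF q(1)] Suc.prems by auto
  obtain x where x: "x \<in> ?S" using q by blast
  have "?S \<noteq> {x}" using Suc.prems(3) x So by auto
  then obtain y where y: "y \<in> ?S" "y \<noteq> x" using x by blast
  have So2: "open (?S - {y})" using So by (simp add: open_Diff)
  obtain U where U: "U \<in> B" "U \<subseteq> ?S - {y}" using pb So2 x y unfolding pi_base_def
    by (metis Diff_iff empty_iff singletonD)
  then obtain z where "z \<in> U" using pb unfolding pi_base_def by blast
  then obtain C where C: "open C" "cvx C" "z \<in> C" "C \<subseteq> U" using cvx_nbhd[of U z] pb U unfolding pi_base_def by blast
  have "U \<subset> fst q" using U y by blast
  then have pc: "(C,U) \<in> cand B (\<lambda>U'. \<exists>p\<in>lev B n. U' \<subset> fst p)" using C U q unfolding cand_def by auto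
  show ?case
  proof (cases "\<exists>r\<in>lev B (Suc n). r \<noteq> (C,U) \<and> fst (C,U) \<inter> fst r \<noteq> {}")
    case True
    then show ?thesis using C U by auto
  next
    case False
    have "(C,U) \<in> maxdisj (cand B (\<lambda>U'. \<exists>p\<in>lev B n. U' \<subset> fst p))"
    proof (rule maxdisj(3)[OF pc])
      fix q assume "q \<in> maxdisj (cand B (\<lambda>U'. \<exists>p\<in>lev B n. U' \<subset> fst p))" "q \<noteq> (C,U)"
      then show "fst (C,U) \<inter> fst q = {}" using False by auto
    qed
    then have "(C,U) \<in> lev B (Suc n)" by simp
    moreover have "fst (C,U) \<inter> O' \<noteq> {}" using C U  by auto
    ultimately show ?thesis by blast
  qed
qed

lemma lev_countable:
  fixes B :: "'a::linorder_topology set set"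
  assumes ccc: "ccc_space TYPE('a)"
  shows "countable (lev B n)"
proof -
  have inj: "inj_on fst (lev B n)"
  proof (rule inj_onI)
    fix p q assume pq: "p \<in> lev B n" "q \<in> lev B n" "fst p = fst q"
    obtain x where "x \<in> fst p" using lev_cand[OF pq(1)] by blast
    then show "p = q" using lev_eq[OF pq(1,2)] pq(3) by simp
  qed
  have F1: "\<forall>U\<in>fst ` lev B n. open U \<and> U \<noteq> {}" using lev_cand by blast
  have F2: "pairwise disjnt (fst ` lev B n)"
  proof (rule pairwiseI)
    fix U1 U2 assume U: "U1 \<in> fst ` lev B n" "U2 \<in> fst ` lev B n" "U1 \<noteq> U2"
    then obtain p q where pq: "p \<in> lev B n" "q \<in> lev B n" "U1 = fst p" "U2 = fst q" by blast
    then have "p \<noteq> q" using U(3) by auto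
    then have "fst p \<inter> fst q = {}" using lev_disj[of B n] pq(1,2) unfolding disjf_def by simp
    then show "disjnt U1 U2" using pq unfolding disjnt_def by simp
  qed
  have "countable (fst ` lev B n)"
    using ccc F1 F2 unfolding ccc_space_def by blast
  then show ?thesis using inj countable_image_inj_on by blast
qed


lemma lev_up_mono:
  assumes "\<exists>p\<in>lev B k. S \<subseteq> fst p" "n \<le> k"
  shows "\<exists>p\<in>lev B n. S \<subseteq> fst p"
  using assms(2,1)
proof (induction k)
  case 0 then show ?case by simp
next
  case (Suc k)
  show ?case
  proof (cases "n = Suc k")
    case True then show ?thesis using Suc by simp
  next
    case False
    then have "n \<le> k" using Suc by simp
    from Suc.prems(2) obtain p where p: "p \<in> lev B (Suc k)" "S \<subseteq> fst p" by blast
    obtain q where q: "q \<in> lev B k" "snd p \<subset> fst q" using lev_parent[OF p(1)] by blast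
    have "S \<subseteq> fst q" using p q lev_cand[OF p(1)] by blast
    then show ?thesis using Suc.IH[OF \<open>n \<le> k\<close>] q by blast
  qed
qed

lemma chain_contra:
  fixes B :: "'a::linorder_topology set set"
  assumes pb: "pi_base B" and fin: "\<forall>W\<in>B. finite {V\<in>B. W \<subseteq> V}"
    and V: "open V" "V \<noteq> {}" and all: "\<forall>n. \<exists>p\<in>lev B n. V \<subseteq> fst p"
  shows False
proof -
  define p where "p n = (SOME p. p \<in> lev B n \<and> V \<subseteq> fst p)" for n
  have p: "p n \<in> lev B n \<and> V \<subseteq> fst (p n)" for n
    unfolding p_def using someI_ex[OF all[rule_format, of n, unfolded Bex_def]] .
  obtain v where v: "v \<in> V" using V by blast
  have step: "snd (p (Suc n)) \<subset> snd (p n)" for n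
  proof -
    obtain q where q: "q \<in> lev B n" "snd (p (Suc n)) \<subset> fst q" using lev_parent p by blast
    have "v \<in> fst q" using q p[of "Suc n"] lev_cand[of "p (Suc n)" B "Suc n"] v by blast
    then have "q = p n" using lev_eq[OF q(1), of "p n" v] p v by blast
    then show ?thesis using q lev_cand[of "p n" B n] p by blast
  qed
  have lt: "n < m \<Longrightarrow> snd (p m) \<subset> snd (p n)" for n m
  proof (induction m)
    case 0 then show ?case by simp
  next
    case (Suc m)
    then show ?case using step[of m] by (metis less_Suc_eq psubset_trans)
  qed
  have inj: "inj (\<lambda>n. snd (p n))"
    by (metis (no_types, lifting) inj_onI lt nat_neq_iff psubset_eq)
  obtain W where W: "W \<in> B" "W \<subseteq> V" using pb V unfolding pi_base_def by blast
  have "range (\<lambda>n. snd (p n)) \<subseteq> {U\<in>B. W \<subseteq> U}"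
    using p lev_cand W by blast
  moreover have "infinite (range (\<lambda>n. snd (p n)))" using inj range_inj_infinite by blast
  ultimately show False using fin W finite_subset by blast
qed

lemma finite_open_isolated:
  fixes Ob :: "'a::t1_space set"
  assumes "open Ob" "finite Ob" "x \<in> Ob"
  shows "open {x}"
proof -
  have "{x} = Ob - (Ob - {x})" using assms by blast
  moreover have "closed (Ob - {x})" using assms by (simp add: finite_imp_closed)
  ultimately show ?thesis using assms by (metis open_Diff)
qed

lemma five_points:
  fixes Ob :: "'a::linorder set"
  assumes "infinite Ob"
  shows "\<exists>q1 q2 q3 q4 q5. q1 \<in> Ob \<and> q2 \<in> Ob \<and> q3 \<in> Ob \<and> q4 \<in> Ob \<and> q5 \<in> Ob \<and> q1 < q2 \<and> q2 < q3 \<and> q3 < q4 \<and> q4 < q5"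
proof -
  obtain S where S: "finite S" "card S = 5" "S \<subseteq> Ob" using infinite_arbitrarily_large[OF assms] by blast
  define xs where "xs = sorted_list_of_set S"
  have len: "length xs = 5" using S by (simp add: xs_def)
  have sw: "sorted_wrt (<) xs" by (simp add: xs_def)
  have set: "set xs \<subseteq> Ob" using S by (simp add: xs_def)
  have lt: "i < j \<Longrightarrow> j < 5 \<Longrightarrow> xs ! i < xs ! j" for i j
    using sw len by (simp add: sorted_wrt_iff_nth_less)
  have mem: "i < 5 \<Longrightarrow> xs ! i \<in> Ob" for i using set len nth_mem by (metis subsetD)
  show ?thesis
    by (rule exI[of _ "xs!0"], rule exI[of _ "xs!1"], rule exI[of _ "xs!2"], rule exI[of _ "xs!3"],
        rule exI[of _ "xs!4"]) (simp add: mem lt)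
qed


lemma main_contra:
  fixes B :: "'a::linorder_topology set set"
  assumes pb: "pi_base B" and fin: "\<forall>W\<in>B. finite {V\<in>B. W \<subseteq> V}"
    and ccc: "ccc_space TYPE('a)" and ns: "\<not> separable_space TYPE('a)"
  shows False
proof -
  define Iso where "Iso = {x::'a. open {x}}"
  have "countable ((\<lambda>x. {x}) ` Iso)"
    using ccc unfolding ccc_space_def Iso_def
    by (auto simp: pairwise_def disjnt_def)
  then have cIso: "countable Iso"
    by (rule countable_image_inj_on) (auto simp: inj_on_def)
  define pt where "pt p = (SOME x. x \<in> fst p)" for p :: "'a set \<times> 'a set"
  have pt: "p \<in> lev B n \<Longrightarrow> pt p \<in> fst p" for p n
    unfolding pt_def using lev_cand[of p B n] by (simp add: some_in_eq)
  define D where "D = pt ` (\<Union>n. lev B n) \<union> Iso"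
  have "countable D" unfolding D_def using cIso lev_countable[OF ccc] by auto
  then have "closure D \<noteq> UNIV" using ns unfolding separable_space_def by blast
  then obtain x0 where "x0 \<notin> closure D" by blast
  then obtain Ob where Ob: "open Ob" "cvx Ob" "x0 \<in> Ob" "Ob \<subseteq> - closure D"
    using cvx_nbhd[of "- closure D" x0] by auto
  have OD: "Ob \<inter> D = {}" using Ob closure_subset by blast
  have noiso: "\<forall>x\<in>Ob. \<not> open {x}" using OD unfolding D_def Iso_def by blast
  have ptO: "p \<in> lev B n \<Longrightarrow> pt p \<notin> Ob" for p n using OD unfolding D_def by blast
  have "infinite Ob" using finite_open_isolated[of Ob x0] Ob noiso by blast
  from five_points[OF this] obtain q1 q2 q3 q4 q5 where q: "q1 \<in> Ob" "q2 \<in> Ob" "q3 \<in> Ob" "q4 \<in> Ob" "q5 \<in> Ob"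
    "q1 < q2" "q2 < q3" "q3 < q4" "q4 < q5" by blast
  define Lft where "Lft k = (\<exists>l. l \<notin> Ob \<and> l < q2 \<and> (\<exists>p\<in>lev B k. {l, q2} \<subseteq> fst p))" for k
  define Rgt where "Rgt k = (\<exists>r. r \<notin> Ob \<and> q4 < r \<and> (\<exists>p\<in>lev B k. {r, q4} \<subseteq> fst p))" for k
  have Lm: "Lft k \<Longrightarrow> n \<le> k \<Longrightarrow> Lft n" for k n
  proof -
    assume "Lft k" "n \<le> k"
    then obtain l where h: "l \<notin> Ob" "l < q2" "\<exists>p\<in>lev B k. {l, q2} \<subseteq> fst p"
      unfolding Lft_def by blast
    have "\<exists>p\<in>lev B n. {l, q2} \<subseteq> fst p" by (rule lev_up_mono[OF h(3) \<open>n \<le> k\<close>])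
    then show "Lft n" using h(1,2) unfolding Lft_def by blast
  qed
  have Rm: "Rgt k \<Longrightarrow> n \<le> k \<Longrightarrow> Rgt n" for k n
  proof -
    assume "Rgt k" "n \<le> k"
    then obtain r where h: "r \<notin> Ob" "q4 < r" "\<exists>p\<in>lev B k. {r, q4} \<subseteq> fst p"
      unfolding Rgt_def by blast
    have "\<exists>p\<in>lev B n. {r, q4} \<subseteq> fst p" by (rule lev_up_mono[OF h(3) \<open>n \<le> k\<close>])
    then show "Rgt n" using h(1,2) unfolding Rgt_def by blast
  qed
  have Ocvx: "a \<in> Ob \<Longrightarrow> b \<in> Ob \<Longrightarrow> a \<le> y \<Longrightarrow> y \<le> b \<Longrightarrow> y \<in> Ob" for a b y
    using Ob(2) unfolding cvx_def by blast
  have dich: "(\<forall>n. Lft n) \<or> (\<forall>n. Rgt n)"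
  proof (rule ccontr)
    assume "\<not> ?thesis"
    then obtain n m where "\<not> Lft n" "\<not> Rgt m" by blast
    then have nL: "\<not> Lft (max n m)" and nR: "\<not> Rgt (max n m)" using Lm Rm by (meson max.cobounded1 max.cobounded2)+
    let ?k = "max n m"
    define W where "W = Ob \<inter> {q2<..<q4}"
    have W: "open W" "W \<noteq> {}" "\<forall>x\<in>W. \<not> open {x}" using Ob q noiso unfolding W_def by auto
    obtain p where p: "p \<in> lev B ?k" "fst p \<inter> W \<noteq> {}" using lev_dense[OF pb W] by blast
    then obtain w where w: "w \<in> fst p" "w \<in> W" by blast
    have wO: "w \<in> Ob" "q2 < w" "w < q4" using w unfolding W_def by auto
    let ?d = "pt p"
    have d: "?d \<in> fst p" "?d \<notin> Ob" using pt[OF p(1)] ptO[OF p(1)] by auto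
    have cp: "cvx (fst p)" using lev_cand[OF p(1)] by blast
    show False
    proof (cases "?d < w")
      case True
      have "?d < q2"
      proof (rule ccontr)
        assume "\<not> ?d < q2"
        then have "q2 \<le> ?d" by simp
        then have "?d \<in> Ob" using Ocvx[of q2 w ?d] q wO True by simp
        then show False using d by simp
      qed
      moreover have "q2 \<in> fst p" using cp d w \<open>?d < q2\<close> wO unfolding cvx_def
        by (meson less_imp_le)
      ultimately have "Lft ?k" unfolding Lft_def using d p by blast
      then show False using nL by simp
    next
      case False
      then have "w < ?d" using d w wO by (metis linorder_neqE)
      have "q4 < ?d"
      proof (rule ccontr)
        assume "\<not> q4 < ?d"
        then have "?d \<le> q4" by simp
        then have "?d \<in> Ob" using Ocvx[of w q4 ?d] q wO \<open>w < ?d\<close> by simp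
        then show False using d by simp
      qed
      moreover have "q4 \<in> fst p" using cp d w \<open>q4 < ?d\<close> wO unfolding cvx_def
        by (meson less_imp_le)
      ultimately have "Rgt ?k" unfolding Rgt_def using d p by blast
      then show False using nR by simp
    qed
  qed
  then show False
  proof
    assume L: "\<forall>n. Lft n"
    define V where "V = Ob \<inter> {..<q2}"
    have V: "open V" "V \<noteq> {}" using Ob q unfolding V_def by auto
    have "\<forall>n. \<exists>p\<in>lev B n. V \<subseteq> fst p"
    proof
      fix n
      obtain l p where lp: "l \<notin> Ob" "l < q2" "p \<in> lev B n" "{l, q2} \<subseteq> fst p"
        using L unfolding Lft_def by blast
      have "V \<subseteq> fst p"
      proof
        fix v assume "v \<in> V"
        then have v: "v \<in> Ob" "v < q2" unfolding V_def by auto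
        have "l < v"
        proof (rule ccontr)
          assume "\<not> l < v"
          then have "l \<in> Ob" using Ocvx[of v q2 l] v q lp by (meson less_imp_le not_less)
          then show False using lp by simp
        qed
        then show "v \<in> fst p" using lev_cand[OF lp(3)] lp v unfolding cvx_def
          by (meson insert_subset less_imp_le)
      qed
      then show "\<exists>p\<in>lev B n. V \<subseteq> fst p" using lp by blast
    qed
    then show False using chain_contra[OF pb fin V] by blast
  next
    assume R: "\<forall>n. Rgt n"
    define V where "V = Ob \<inter> {q4<..}"
    have V: "open V" "V \<noteq> {}" using Ob q unfolding V_def by auto
    have "\<forall>n. \<exists>p\<in>lev B n. V \<subseteq> fst p"
    proof
      fix n
      obtain r p where rp: "r \<notin> Ob" "q4 < r" "p \<in> lev B n" "{r, q4} \<subseteq> fst p"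
        using R unfolding Rgt_def by blast
      have "V \<subseteq> fst p"
      proof
        fix v assume "v \<in> V"
        then have v: "v \<in> Ob" "q4 < v" unfolding V_def by auto
        have "v < r"
        proof (rule ccontr)
          assume "\<not> v < r"
          then have "r \<in> Ob" using Ocvx[of q4 v r] v q rp by (meson less_imp_le not_less)
          then show False using rp by simp
        qed
        then show "v \<in> fst p" using lev_cand[OF rp(3)] rp v unfolding cvx_def
          by (meson insert_subset less_imp_le)
      qed
      then show "\<exists>p\<in>lev B n. V \<subseteq> fst p" using rp by blast
    qed
    then show False using chain_contra[OF pb fin V] by blast
  qed
qed

theorem theorem2p26:
  assumes "suslin_line TYPE('a::linorder_topology)"
  shows "\<forall>\<kappa>::'k rel. Card_order \<kappa> \<and> (natLeq, \<kappa>) \<in> ordLeq \<and> (\<kappa>, cardSuc natLeq) \<in> ordLess \<longrightarrow>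
           \<not> (\<exists>B::'a set set. pi_base B \<and> op_like \<kappa> B)"
proof (intro allI impI notI)
  fix \<kappa> :: "'k rel"
  assume k: "Card_order \<kappa> \<and> (natLeq, \<kappa>) \<in> ordLeq \<and> (\<kappa>, cardSuc natLeq) \<in> ordLess"
  assume "\<exists>B::'a set set. pi_base B \<and> op_like \<kappa> B"
  then obtain B :: "'a set set" where B: "pi_base B" "op_like \<kappa> B" by blast
  have kw: "Well_order \<kappa>" using k card_order_on_well_order_on by blast
  have nl: "\<not> (natLeq, \<kappa>) \<in> ordLess"
  proof
    assume "(natLeq, \<kappa>) \<in> ordLess"
    then have "(cardSuc natLeq, \<kappa>) \<in> ordLeq"
      using cardSuc_ordLess_ordLeq[OF natLeq_Card_order, of \<kappa>] k by blast
    then have "(\<kappa>, \<kappa>) \<in> ordLess" using k ordLess_ordLeq_trans by blast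
    then show False using ordLess_irreflexive by blast
  qed
  have kn: "(\<kappa>, natLeq) \<in> ordLeq"
    using not_ordLess_iff_ordLeq[OF kw natLeq_Well_order] nl by blast
  have fin: "\<forall>W\<in>B. finite {V\<in>B. W \<subseteq> V}"
  proof
    fix W assume W: "W \<in> B"
    show "finite {V\<in>B. W \<subseteq> V}"
    proof (rule ccontr)
      assume "infinite {V\<in>B. W \<subseteq> V}"
      then have "(natLeq, card_of {V\<in>B. W \<subseteq> V}) \<in> ordLeq" using infinite_iff_natLeq_ordLeq by blast
      then have "(\<kappa>, card_of {V\<in>B. W \<subseteq> V}) \<in> ordLeq" using kn ordLeq_transitive by blast
      then show False using B(2) W unfolding op_like_def by blast
    qed
  qed
  show False using main_contra[OF B(1) fin] assms unfolding suslin_line_def by blast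
qed

end
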